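(* The Lie algebra of the Lie group $(\delta+\mathbb{K}^m_{LC}\langle\langle X\rangle\rangle,\circ,\delta)$ (Silva topology) is $\mathbb{K}^m_{LC}\langle\langle X\rangle\rangle$ with Lie bracket $[c,d]=c\lhd d-d\lhd c$.
   Context: $\mathbb{K}\in\{\mathbb{R},\mathbb{C}\}$. $X=\{x_0,x_1,\ldots,x_m\}$ is a finite alphabet, $X^\ast$ its words (including $\emptyset$), $|\eta|$ the length. For series $c\colon X^\ast\to\mathbb{K}^m$ and $M>0$, $\|c\|_{\ell_\infty,M}=\sup_\eta|(c,\eta)|/(M^{|\eta|}|\eta|!)$; $\mathbb{K}^m_{LC}\langle\langle X\rangle\rangle$ is the union over $M>0$ of the Banach spaces $\{c:\|c\|_{\ell_\infty,M}<\infty\}$ with the Silva topology (locally convex inductive limit); $d[i]$ is the $i$-th component of $d$. $\delta+\mathbb{K}^m_{LC}\langle\langle X\rangle\rangle=\{\delta+c\}$, $\delta$ a formal symbol. The shuffle product $\sqcup\!\sqcup$ is determined on words by $(x_i\eta)\sqcup\!\sqcup(x_j\xi)=x_i(\eta\sqcup\!\sqcup(x_j\xi))+x_j((x_i\eta)\sqcup\!\sqcup\xi)$, $\eta\sqcup\!\sqcup\emptyset=\emptyset\sqcup\!\sqcup\eta=\eta$. Mixed composition: with $d[0]:=0$, $\phi_d(\emptyset)=\mathrm{id}$, $\phi_d(x_i\eta)=\phi_d(x_i)\circ\phi_d(\eta)$, $\phi_d(x_i)(e)=x_ie+x_0(d[i]\sqcup\!\sqcup e)$, $c\,\tilde\circ\,d_\delta=\sum_\eta(c,\eta)\phi_d(\eta)(1\cdot\emptyset)$;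 group product $(\delta+c)\circ(\delta+d)=\delta+d+c\,\tilde\circ\,d_\delta$, identity $\delta$; this is an analytic Lie group for the Silva topology. Pre-Lie product: $c\lhd d=\sum_\eta(c,\eta)\,\eta\lhd d$ with $\emptyset\lhd d=0$, $(x_0\eta)\lhd d=x_0(\eta\lhd d)$, $(x_j\eta)\lhd d=x_j(\eta\lhd d)+x_0(\eta\sqcup\!\sqcup d[j])$, $j=1,\ldots,m$. The Lie algebra is $T_\delta$ of the group with bracket obtained by evaluating at $\delta$ the bracket of left-invariant vector fields. *)

theory Defs
  imports Complex_Main "HOL-Library.Function_Algebras"
begin

text \<open>Letters x_0,...,x_m are the naturals 0..m; words are nat lists.
  A scalar series is a map nat list => K; a K^m-valued series is a map
  nat list => nat => K, where the second argument i in {1..m} selects the component.\<close>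

type_synonym 'a sser = "nat list \<Rightarrow> 'a"
type_synonym 'a vser = "nat list \<Rightarrow> nat \<Rightarrow> 'a"

fun wsh :: "nat list \<Rightarrow> nat list \<Rightarrow> nat list list" where
  "wsh [] v = [v]"
| "wsh u [] = [u]"
| "wsh (a # u) (b # v) = map ((#) a) (wsh u (b # v)) @ map ((#) b) (wsh (a # u) v)"

text \<open>Bilinear extension of the word shuffle (wsh lists the words of u shuffle v with
  multiplicity); only words u, v with letters from w and length at most |w| can contribute.\<close>
definition ssh :: "'a::comm_ring_1 sser \<Rightarrow> 'a sser \<Rightarrow> 'a sser" where
  "ssh a b w = (\<Sum>u\<in>{u. set u \<subseteq> set w \<and> length u \<le> length w}.
                 \<Sum>v\<in>{v. set v \<subseteq> set w \<and> length v \<le> length w}.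
                   a u * b v * of_nat (count_list (wsh u v) w))"

definition pre :: "nat \<Rightarrow> 'a::zero sser \<Rightarrow> 'a sser" where
  "pre i e w = (case w of [] \<Rightarrow> 0 | a # w' \<Rightarrow> (if a = i then e w' else 0))"

definition chr :: "nat list \<Rightarrow> 'a::{zero,one} sser" where
  "chr \<eta> w = (if w = \<eta> then 1 else 0)"

definition comp :: "nat \<Rightarrow> 'a::zero vser \<Rightarrow> 'a sser" where
  "comp j d w = (if j = 0 then 0 else d w j)"

definition smul :: "'a::times \<Rightarrow> 'a vser \<Rightarrow> 'a vser" where
  "smul t c = (\<lambda>w i. t * c w i)"

definition phi1 :: "'a::comm_ring_1 vser \<Rightarrow> nat \<Rightarrow> 'a sser \<Rightarrow> 'a sser" where
  "phi1 d i e = (\<lambda>w. pre i e w + pre 0 (ssh (comp i d) e) w)"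

fun phiw :: "'a::comm_ring_1 vser \<Rightarrow> nat list \<Rightarrow> 'a sser \<Rightarrow> 'a sser" where
  "phiw d [] e = e"
| "phiw d (i # \<eta>) e = phi1 d i (phiw d \<eta> e)"

text \<open>c mixed-composed with d_delta; the formal sum over eta is locally finite: phi_d(eta)(1)
  only contains words of length at least |eta|.\<close>
definition mixcomp :: "nat \<Rightarrow> 'a::comm_ring_1 vser \<Rightarrow> 'a vser \<Rightarrow> 'a vser" where
  "mixcomp m c d = (\<lambda>w j. \<Sum>\<eta>\<in>{\<eta>. set \<eta> \<subseteq> {0..m} \<and> length \<eta> \<le> length w}.
                       c \<eta> j * phiw d \<eta> (chr []) w)"

text \<open>Group product in the global chart delta + c |-> c:
  (delta + c) o (delta + d) = delta + (d + c mixcomp d_delta).\<close>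
definition gprod :: "nat \<Rightarrow> 'a::comm_ring_1 vser \<Rightarrow> 'a vser \<Rightarrow> 'a vser" where
  "gprod m c d = d + mixcomp m c d"

fun wpl :: "'a::comm_ring_1 vser \<Rightarrow> nat list \<Rightarrow> 'a sser" where
  "wpl d [] = (\<lambda>w. 0)"
| "wpl d (j # \<eta>) = (\<lambda>w. pre j (wpl d \<eta>) w
                        + (if j = 0 then 0 else pre 0 (ssh (chr \<eta>) (comp j d)) w))"

definition prelie :: "nat \<Rightarrow> 'a::comm_ring_1 vser \<Rightarrow> 'a vser \<Rightarrow> 'a vser" where
  "prelie m c d = (\<lambda>w k. \<Sum>\<eta>\<in>{\<eta>. set \<eta> \<subseteq> {0..m} \<and> length \<eta> \<le> length w}.
                       c \<eta> k * wpl d \<eta> w)"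

definition ser :: "nat \<Rightarrow> 'a::zero vser set" where
  "ser m = {c. \<forall>w i. (\<not> set w \<subseteq> {0..m} \<or> i \<notin> {1..m}) \<longrightarrow> c w i = 0}"

definition growth_bdd :: "real \<Rightarrow> 'a::real_normed_field vser \<Rightarrow> bool" where
  "growth_bdd M c \<longleftrightarrow> (\<exists>B. \<forall>w i. norm (c w i) \<le> B * M ^ length w * fact (length w))"

definition EM :: "nat \<Rightarrow> real \<Rightarrow> 'a::real_normed_field vser set" where
  "EM m M = {c \<in> ser m. growth_bdd M c}"

definition snorm :: "real \<Rightarrow> 'a::real_normed_field vser \<Rightarrow> real" where
  "snorm M c = Sup {norm (c w i) / (M ^ length w * fact (length w)) | w i. True}"

definition LC :: "nat \<Rightarrow> 'a::real_normed_field vser set" where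
  "LC m = (\<Union>M\<in>{M. M > 0}. EM m M)"

definition absconv :: "'a::real_normed_field vser set \<Rightarrow> bool" where
  "absconv V \<longleftrightarrow>
     (\<forall>a v. v \<in> V \<longrightarrow> norm a \<le> 1 \<longrightarrow> smul a v \<in> V) \<and>
     (\<forall>u v (l::real). u \<in> V \<longrightarrow> v \<in> V \<longrightarrow> 0 \<le> l \<longrightarrow> l \<le> 1 \<longrightarrow>
        smul (of_real l) u + smul (of_real (1 - l)) v \<in> V)"

text \<open>0-neighbourhoods of the locally convex inductive limit: absolutely convex sets
  whose trace on every step E_M is a 0-neighbourhood of E_M.\<close>
definition zero_nbhd :: "nat \<Rightarrow> 'a::real_normed_field vser set \<Rightarrow> bool" where
  "zero_nbhd m V \<longleftrightarrow> V \<subseteq> LC m \<and> absconv V \<and>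
     (\<forall>M>0. \<exists>\<epsilon>>0. \<forall>c\<in>EM m M. snorm M c < \<epsilon> \<longrightarrow> c \<in> V)"

definition silva_open :: "nat \<Rightarrow> 'a::real_normed_field vser set \<Rightarrow> bool" where
  "silva_open m U \<longleftrightarrow> U \<subseteq> LC m \<and> (\<forall>u\<in>U. \<exists>V. zero_nbhd m V \<and> (\<forall>v\<in>V. u + v \<in> U))"

definition silva_tendsto ::
  "nat \<Rightarrow> ('b \<Rightarrow> 'a::real_normed_field vser) \<Rightarrow> 'a vser \<Rightarrow> 'b filter \<Rightarrow> bool" where
  "silva_tendsto m f L F \<longleftrightarrow> L \<in> LC m \<and>
     (\<forall>U. silva_open m U \<longrightarrow> L \<in> U \<longrightarrow> eventually (\<lambda>t. f t \<in> U) F)"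

definition dirderiv ::
  "nat \<Rightarrow> ('a::real_normed_field vser \<Rightarrow> 'a vser) \<Rightarrow> 'a vser \<Rightarrow> 'a vser \<Rightarrow> 'a vser \<Rightarrow> bool" where
  "dirderiv m f p v L \<longleftrightarrow>
     silva_tendsto m (\<lambda>t. smul (inverse t) (f (p + smul t v) - f p)) L (at 0)"

text \<open>X is (the chart expression of) the left-invariant vector field with value x at delta:
  X(g) = T_delta(lambda_g)(x) = d/dt (g o (delta + t x)) at t = 0.\<close>
definition is_livf :: "nat \<Rightarrow> 'a::real_normed_field vser \<Rightarrow> ('a vser \<Rightarrow> 'a vser) \<Rightarrow> bool" where
  "is_livf m x X \<longleftrightarrow> (\<forall>c\<in>LC m. dirderiv m (gprod m c) 0 x (X c))"

end

theory Submission
  imports Defs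
begin

fun unsh :: "nat list \<Rightarrow> (nat list \<times> nat list) list" where
  "unsh [] = [([],[])]"
| "unsh (a # w) = map (\<lambda>(u,v). (a # u, v)) (unsh w) @ map (\<lambda>(u,v). (u, a # v)) (unsh w)"

lemma unsh_set: "(u,v) \<in> set (unsh w) \<Longrightarrow> set w = set u \<union> set v \<and> length u + length v = length w"
  by (induction w arbitrary: u v) auto

lemma count_map_inj: "inj f \<Longrightarrow> count_list (map f xs) (f z) = count_list xs z"
  by (induction xs) (auto dest: injD)

lemma count_map_notin: "y \<notin> range f \<Longrightarrow> count_list (map f xs) y = 0"
  by (induction xs) auto

lemma count_map_Cons: "count_list (map ((#) a) xs) w =
   (case w of [] \<Rightarrow> 0 | b # w' \<Rightarrow> if a = b then count_list xs w' else 0)"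
  by (induction xs) (auto split: list.splits)

lemma count_unsh_L: "count_list (map (\<lambda>(u,v). (a # u, v)) xs) (u0, v0) =
   (case u0 of [] \<Rightarrow> 0 | b # u' \<Rightarrow> if a = b then count_list xs (u', v0) else 0)"
  by (induction xs) (auto split: list.splits)

lemma count_unsh_R: "count_list (map (\<lambda>(u,v). (u, a # v)) xs) (u0, v0) =
   (case v0 of [] \<Rightarrow> 0 | b # v' \<Rightarrow> if a = b then count_list xs (u0, v') else 0)"
  by (induction xs) (auto split: list.splits)

lemma wsh_Nil2[simp]: "wsh u [] = [u]"
  by (cases u) auto

lemma wsh_Nil_iff: "[] \<in> set (wsh u v) \<longleftrightarrow> u = [] \<and> v = []"
  by (induction u v rule: wsh.induct) auto

lemma count_wsh_unsh: "count_list (wsh u v) w = count_list (unsh w) (u,v)"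
proof (induction w arbitrary: u v)
  case Nil
  show ?case
  proof (cases "u = [] \<and> v = []")
    case True thus ?thesis by simp
  next
    case False
    hence "[] \<notin> set (wsh u v)" using wsh_Nil_iff by blast
    hence "count_list (wsh u v) [] = 0" by (simp add: count_list_0_iff)
    thus ?thesis using False by auto
  qed
next
  case (Cons c w)
  show ?case
  proof (cases u)
    case Nil
    have "count_list (unsh w) ([], v') = (if v' = w then 1 else 0)" for v'
      using Cons.IH[of "[]" v'] by (cases "v' = w") auto
    with Nil show ?thesis
      by (cases v) (auto simp: count_unsh_L count_unsh_R)
  next
    case (Cons a u')
    show ?thesis
    proof (cases v)
      case Nil
      then show ?thesis using \<open>u = a # u'\<close>
        by (auto simp: count_unsh_L count_unsh_R Cons.IH[symmetric])
    next
      case (Cons b v')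
      then show ?thesis using \<open>u = a # u'\<close>
        by (auto simp: count_unsh_L count_unsh_R count_map_Cons Cons.IH[symmetric])
    qed
  qed
qed

lemma sum_count_gen:
  fixes f :: "'b \<Rightarrow> 'a::comm_ring_1"
  assumes "set xs \<subseteq> X" "finite X"
  shows "(\<Sum>z\<in>X. of_nat (count_list xs z) * f z) = sum_list (map f xs)"
  using assms(1)
proof (induction xs)
  case Nil then show ?case by simp
next
  case (Cons x xs)
  have "(\<Sum>z\<in>X. of_nat (count_list (x # xs) z) * f z)
      = (\<Sum>z\<in>X. of_nat (count_list xs z) * f z + (if x = z then f z else 0))"
    by (rule sum.cong) (auto simp: algebra_simps)
  also have "\<dots> = (\<Sum>z\<in>X. of_nat (count_list xs z) * f z) + f x"
    using Cons.prems assms(2) by (simp add: sum.distrib)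
  finally show ?case using Cons by simp
qed

lemma ssh_unsh: "ssh a b w = sum_list (map (\<lambda>(u,v). a u * b v) (unsh w))"
proof -
  define S where "S = {u. set u \<subseteq> set w \<and> length u \<le> length w}"
  have fS: "finite S" unfolding S_def by (rule finite_lists_length_le) simp
  have sub: "set (unsh w) \<subseteq> S \<times> S"
    using unsh_set unfolding S_def by fastforce
  have "ssh a b w = (\<Sum>u\<in>S. \<Sum>v\<in>S. a u * b v * of_nat (count_list (unsh w) (u,v)))"
    unfolding ssh_def S_def by (simp add: count_wsh_unsh)
  also have "\<dots> = (\<Sum>z\<in>S \<times> S. of_nat (count_list (unsh w) z) * (\<lambda>(u,v). a u * b v) z)"
    by (subst sum.cartesian_product) (auto intro!: sum.cong simp: algebra_simps)
  also have "\<dots> = sum_list (map (\<lambda>(u,v). a u * b v) (unsh w))"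
    by (rule sum_count_gen[OF sub]) (simp add: fS)
  finally show ?thesis .
qed

lemma ssh_comm_aux: fixes a b :: "nat list \<Rightarrow> 'a::comm_ring_1" shows "sum_list (map (\<lambda>(u,v). a u * b v) (unsh w)) = sum_list (map (\<lambda>(u,v). b u * a v) (unsh w))"
proof (induction w arbitrary: a b)
  case Nil then show ?case by (simp add: mult.commute)
next
  case (Cons c w)
  have 1: "sum_list (map (\<lambda>(u,v). a (c # u) * b v) (unsh w)) = sum_list (map (\<lambda>(u,v). b u * a (c # v)) (unsh w))"
    using Cons.IH[of "\<lambda>u. a (c # u)" b] by simp
  have 2: "sum_list (map (\<lambda>(u,v). a u * b (c # v)) (unsh w)) = sum_list (map (\<lambda>(u,v). b (c # u) * a v) (unsh w))"
    using Cons.IH[of a "\<lambda>v. b (c # v)"] by simp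
  show ?case using 1 2 by (simp add: o_def case_prod_unfold add.commute)
qed

lemma ssh_comm: "ssh a b w = ssh b a w"
  unfolding ssh_unsh by (rule ssh_comm_aux)

lemma ssh_smult1: "ssh (\<lambda>u. t * a u) b w = t * ssh a b w"
  unfolding ssh_def by (simp add: sum_distrib_left algebra_simps)

lemma ssh_smult2: "ssh a (\<lambda>u. t * b u) w = t * ssh a b w"
  unfolding ssh_def by (simp add: sum_distrib_left algebra_simps)

lemma ssh_diff2: "ssh a (\<lambda>u. b u - b' u) w = ssh a b w - ssh a b' w"
  unfolding ssh_def by (simp add: sum_subtractf algebra_simps)

lemma ssh_zero1: "ssh (\<lambda>u. 0) b w = 0"
  unfolding ssh_def by simp

lemma sum_list_map_zero: "(\<And>x. x \<in> set xs \<Longrightarrow> f x = 0) \<Longrightarrow> sum_list (map f xs) = 0"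
  by (induction xs) auto

lemma ssh_support:
  assumes "\<And>u. \<not> set u \<subseteq> G \<Longrightarrow> a u = 0" "\<And>v. \<not> set v \<subseteq> G \<Longrightarrow> b v = 0" "\<not> set w \<subseteq> G"
  shows "ssh a b w = 0"
proof -
  have "\<forall>z\<in>set (unsh w). (\<lambda>(u,v). a u * b v) z = 0"
  proof
    fix z assume "z \<in> set (unsh w)"
    obtain u v where z: "z = (u,v)" by (cases z)
    with \<open>z \<in> set (unsh w)\<close> have "set w = set u \<union> set v" using unsh_set by blast
    then have "\<not> set u \<subseteq> G \<or> \<not> set v \<subseteq> G" using assms(3) by auto
    then show "(\<lambda>(u,v). a u * b v) z = 0" using assms(1,2) z
      by (metis (no_types, lifting) case_prod_conv mult_zero_left mult_zero_right)
  qed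
  then show ?thesis unfolding ssh_unsh by (intro sum_list_map_zero) blast
qed

lemma unsh_len_sum:
  fixes f h :: "nat \<Rightarrow> real"
  shows "sum_list (map (\<lambda>(u,v). f (length u) * h (length v)) (unsh w)) =
         (\<Sum>k\<le>length w. real (length w choose k) * f k * h (length w - k))"
proof (induction w arbitrary: f h)
  case Nil then show ?case by simp
next
  case (Cons c w)
  define n where "n = length w"
  have L: "sum_list (map (\<lambda>(u,v). f (length u) * h (length v)) (unsh (c # w))) =
     (\<Sum>k\<le>n. real (n choose k) * f (Suc k) * h (n - k)) +
     (\<Sum>k\<le>n. real (n choose k) * f k * h (Suc n - k))"
    using Cons.IH[of "\<lambda>k. f (Suc k)" h] Cons.IH[of f "\<lambda>k. h (Suc k)"]
    by (simp add: o_def case_prod_unfold n_def Suc_diff_le)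
  have A: "(\<Sum>k\<le>n. real (n choose k) * f k * h (Suc n - k)) =
        f 0 * h (Suc n) + (\<Sum>k\<le>n. real (n choose Suc k) * f (Suc k) * h (n - k))"
  proof -
    have "(\<Sum>k\<le>n. real (n choose k) * f k * h (Suc n - k)) =
          (\<Sum>k\<le>Suc n. real (n choose k) * f k * h (Suc n - k))"
      by simp
    also have "\<dots> = f 0 * h (Suc n) + (\<Sum>k\<le>n. real (n choose Suc k) * f (Suc k) * h (n - k))"
      by (subst sum.atMost_Suc_shift) simp
    finally show ?thesis .
  qed
  have B: "(\<Sum>k\<le>Suc n. real (Suc n choose k) * f k * h (Suc n - k)) =
        f 0 * h (Suc n) + (\<Sum>k\<le>n. real (n choose k) * f (Suc k) * h (n - k))
          + (\<Sum>k\<le>n. real (n choose Suc k) * f (Suc k) * h (n - k))"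
    by (subst sum.atMost_Suc_shift) (simp add: sum.distrib algebra_simps)
  show ?case using L A B by (simp add: n_def)
qed

lemma norm_sum_list_le: "norm (sum_list (map f xs)) \<le> sum_list (map (\<lambda>x. norm (f x)) xs)"
  by (induction xs) (auto intro: order.trans[OF norm_triangle_ineq])

lemma sum_list_mono_gen: "(\<And>x. x \<in> set xs \<Longrightarrow> (f x::real) \<le> g x) \<Longrightarrow> sum_list (map f xs) \<le> sum_list (map g xs)"
  by (induction xs) (auto intro: add_mono)

lemma ssh_bound:
  fixes a b :: "'a::real_normed_field sser"
  assumes "\<And>u. set u \<subseteq> G \<Longrightarrow> norm (a u) \<le> f (length u)"
      and "\<And>v. set v \<subseteq> G \<Longrightarrow> norm (b v) \<le> h (length v)"
      and "\<And>k. 0 \<le> f k" "\<And>k. 0 \<le> h k" "set w \<subseteq> G"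
  shows "norm (ssh a b w) \<le> (\<Sum>k\<le>length w. real (length w choose k) * f k * h (length w - k))"
proof -
  have "norm (ssh a b w) \<le> sum_list (map (\<lambda>(u,v). norm (a u * b v)) (unsh w))"
    unfolding ssh_unsh using norm_sum_list_le[of "\<lambda>(u,v). a u * b v"] by (simp add: case_prod_unfold)
  also have "\<dots> \<le> sum_list (map (\<lambda>(u,v). f (length u) * h (length v)) (unsh w))"
  proof (rule sum_list_mono_gen)
    fix z assume z: "z \<in> set (unsh w)"
    obtain u v where zz: "z = (u,v)" by (cases z)
    with z have "set w = set u \<union> set v" using unsh_set by blast
    with assms(5) have "set u \<subseteq> G" "set v \<subseteq> G" by auto
    then show "(\<lambda>(u,v). norm (a u * b v)) z \<le> (\<lambda>(u,v). f (length u) * h (length v)) z"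
      using assms(1,2) zz by (simp add: norm_mult mult_mono')
  qed
  also have "\<dots> = (\<Sum>k\<le>length w. real (length w choose k) * f k * h (length w - k))"
    by (rule unsh_len_sum)
  finally show ?thesis .
qed


definition gb :: "nat \<Rightarrow> real \<Rightarrow> nat \<Rightarrow> nat list \<Rightarrow> real" where
  "gb m A p w = (if set w \<subseteq> {0..m} \<and> p \<le> length w then A ^ length w * fact (length w) / fact p else 0)"

lemma gb_nonneg: "0 \<le> A \<Longrightarrow> 0 \<le> gb m A p w"
  unfolding gb_def by auto

lemma geom_half: "(\<Sum>k\<le>n. (1/2::real) ^ k) \<le> 2"
proof -
  have "(\<Sum>k\<le>n. (1/2::real) ^ k) = (\<Sum>k<Suc n. (1/2::real) ^ k)"
    by (simp add: lessThan_Suc_atMost)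
  also have "\<dots> = (1 - (1/2)^Suc n) / (1 - 1/2)"
    by (subst geometric_sum) auto
  also have "\<dots> \<le> 2" by simp
  finally show ?thesis .
qed

lemma key_sum:
  fixes A B M :: real
  assumes "0 < M" "0 \<le> B" "2 * M \<le> A"
  shows "(\<Sum>k\<le>n. real (n choose k) * (B * M ^ k * fact k) *
            (if p \<le> n - k then A ^ (n - k) * fact (n - k) / fact p else 0))
         \<le> (if p \<le> n then 2 * B * A ^ n * fact n / fact p else 0)"
proof (cases "p \<le> n")
  case False
  then have "\<And>k. \<not> p \<le> n - k" by auto
  then show ?thesis using False by simp
next
  case True
  have A0: "0 \<le> A" using assms by simp
  have "(\<Sum>k\<le>n. real (n choose k) * (B * M ^ k * fact k) *
            (if p \<le> n - k then A ^ (n - k) * fact (n - k) / fact p else 0))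
        \<le> (\<Sum>k\<le>n. B * A ^ n * fact n / fact p * (1/2) ^ k)"
  proof (rule sum_mono)
    fix k assume k: "k \<in> {..n}"
    then have kn: "k \<le> n" by simp
    have f: "real (n choose k) * fact k * fact (n - k) = fact n"
    proof -
      have "real (fact k * fact (n - k) * (n choose k)) = real (fact n)"
        using binomial_fact_lemma[OF kn] by (simp only:)
      then show ?thesis by (simp add: algebra_simps)
    qed
    have Mk: "M ^ k \<le> (A/2) ^ k" using assms by (intro power_mono) auto
    have "M ^ k * A ^ (n - k) \<le> (A/2) ^ k * A ^ (n - k)"
      using Mk A0 by (intro mult_right_mono) auto
    also have "\<dots> = A ^ n * (1/2) ^ k"
    proof -
      have "(A/2) ^ k * A ^ (n - k) = (1/2)^k * (A ^ k * A ^ (n - k))" by (simp add: power_divide)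
      also have "A ^ k * A ^ (n - k) = A ^ n" using kn by (simp flip: power_add)
      finally show ?thesis by simp
    qed
    finally have MA: "M ^ k * A ^ (n - k) \<le> A ^ n * (1/2) ^ k" .
    show "real (n choose k) * (B * M ^ k * fact k) *
            (if p \<le> n - k then A ^ (n - k) * fact (n - k) / fact p else 0)
          \<le> B * A ^ n * fact n / fact p * (1/2) ^ k"
    proof (cases "p \<le> n - k")
      case True
      have "real (n choose k) * (B * M ^ k * fact k) * (A ^ (n - k) * fact (n - k) / fact p)
          = B * (M ^ k * A ^ (n - k)) * (real (n choose k) * fact k * fact (n - k)) / fact p"
        by (simp add: ac_simps)
      also have "\<dots> = B * (M ^ k * A ^ (n - k)) * fact n / fact p" by (simp add: f)
      also have "\<dots> \<le> B * (A ^ n * (1/2) ^ k) * fact n / fact p"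
        using MA assms(2) by (intro divide_right_mono mult_right_mono mult_left_mono) auto
      finally show ?thesis using True by (simp add: mult.commute mult.left_commute)
    next
      case False
      then show ?thesis using assms A0 by simp
    qed
  qed
  also have "\<dots> = B * A ^ n * fact n / fact p * (\<Sum>k\<le>n. (1/2) ^ k)"
    by (simp add: sum_distrib_left)
  also have "\<dots> \<le> B * A ^ n * fact n / fact p * 2"
    using assms A0 by (intro mult_left_mono geom_half) auto
  finally show ?thesis using True by (simp add: ac_simps)
qed

lemma pre_Nil[simp]: "pre i e [] = 0" by (simp add: pre_def)
lemma pre_Cons[simp]: "pre i e (a # w) = (if a = i then e w else 0)" by (simp add: pre_def)

lemma fact_ratio_mono:
  assumes "p \<le> n"
  shows "fact n / fact p \<le> (fact (Suc n) / fact (Suc p) :: real)"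
proof -
  have "fact n * fact (Suc p) \<le> (fact (Suc n) * fact p :: real)"
    using assms by (simp add: algebra_simps mult_right_mono)
  then show ?thesis by (simp add: divide_simps)
qed

lemma step_bound:
  fixes F G a :: "'a::real_normed_field sser"
  assumes im: "i \<le> m" and M: "0 < M" and B: "0 \<le> B" and AM: "2 * M \<le> A" and AB: "1 + 2 * B \<le> A"
    and s: "0 \<le> s"
    and ha: "\<And>u. norm (a u) \<le> (if set u \<subseteq> {0..m} then B * M ^ length u * fact (length u) else 0)"
    and hF: "\<And>w. norm (F w) \<le> s * gb m A p w"
    and hG: "\<And>w. norm (G w) \<le> s * gb m A p w"
  shows "norm (pre i F w + pre 0 (ssh a G) w) \<le> s * gb m A (Suc p) w"
proof -
  have A0: "0 \<le> A" using AB B by simp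
  show ?thesis
  proof (cases w)
    case Nil then show ?thesis using s A0 by (simp add: gb_nonneg)
  next
    case (Cons c w')
    show ?thesis
    proof (cases "set w \<subseteq> {0..m}")
      case False
      show ?thesis
      proof (cases "c \<le> m")
        case True
        with False Cons have bad: "\<not> set w' \<subseteq> {0..m}" by auto
        have "norm (F w') \<le> 0" using hF[of w'] bad by (simp add: gb_def)
        then have F0: "F w' = 0" by simp
        have G0: "G v = 0" if "\<not> set v \<subseteq> {0..m}" for v
          using hG[of v] that by (simp add: gb_def)
        have a0: "a u = 0" if "\<not> set u \<subseteq> {0..m}" for u
          using ha[of u] that by simp
        have "ssh a G w' = 0" by (rule ssh_support[OF a0 G0 bad])
        then show ?thesis using Cons F0 s A0 by (simp add: gb_nonneg)
      next
        case False
        then have "c \<noteq> i" "c \<noteq> 0" using im by auto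
        then show ?thesis using Cons s A0 by (simp add: gb_nonneg)
      qed
    next
      case True
      define n where "n = length w'"
      have good: "set w' \<subseteq> {0..m}" using True Cons by auto
      have "norm (pre i F w + pre 0 (ssh a G) w) \<le> norm (F w') + norm (ssh a G w')"
        using Cons by (auto intro: order.trans[OF norm_triangle_ineq])
      also have "norm (ssh a G w') \<le> (\<Sum>k\<le>n. real (n choose k) * (B * M ^ k * fact k) *
            (s * (if p \<le> n - k then A ^ (n - k) * fact (n - k) / fact p else 0)))"
        unfolding n_def
      proof (rule ssh_bound[where G = "{0..m}"])
        show "norm (a u) \<le> B * M ^ length u * fact (length u)" if "set u \<subseteq> {0..m}" for u
          using ha[of u] that by simp
        show "norm (G v) \<le> s * (if p \<le> length v then A ^ length v * fact (length v) / fact p else 0)"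
          if "set v \<subseteq> {0..m}" for v
          using hG[of v] that by (simp add: gb_def)
      qed (use B M A0 s good in auto)
      also have "(\<Sum>k\<le>n. real (n choose k) * (B * M ^ k * fact k) *
            (s * (if p \<le> n - k then A ^ (n - k) * fact (n - k) / fact p else 0)))
          = s * (\<Sum>k\<le>n. real (n choose k) * (B * M ^ k * fact k) *
            (if p \<le> n - k then A ^ (n - k) * fact (n - k) / fact p else 0))"
        by (simp add: sum_distrib_left ac_simps)
      also have "\<dots> \<le> s * (if p \<le> n then 2 * B * A ^ n * fact n / fact p else 0)"
        using key_sum[OF M B AM] s by (intro mult_left_mono) auto
      also have "norm (F w') \<le> s * (if p \<le> n then A ^ n * fact n / fact p else 0)"
        using hF[of w'] good unfolding gb_def n_def by simp
      finally have 1: "norm (pre i F w + pre 0 (ssh a G) w) \<le>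
          s * ((if p \<le> n then A ^ n * fact n / fact p else 0) + (if p \<le> n then 2 * B * A ^ n * fact n / fact p else 0))"
        by (simp add: algebra_simps)
      have 2: "(if p \<le> n then A ^ n * fact n / fact p else 0) + (if p \<le> n then 2 * B * A ^ n * fact n / fact p else 0)
           \<le> gb m A (Suc p) w"
      proof (cases "p \<le> n")
        case True
        have "A ^ n * fact n / fact p + 2 * B * A ^ n * fact n / fact p = (1 + 2 * B) * (A ^ n * (fact n / fact p))"
          by (simp add: algebra_simps add_divide_distrib)
        also have "\<dots> \<le> A * (A ^ n * (fact (Suc n) / fact (Suc p)))"
          using AB A0 fact_ratio_mono[OF True] by (intro mult_mono) auto
        also have "\<dots> = gb m A (Suc p) w"
          using True \<open>set w \<subseteq> {0..m}\<close> Cons by (simp add: gb_def n_def)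
        finally show ?thesis using True by simp
      next
        case False then show ?thesis using A0 by (simp add: gb_nonneg)
      qed
      show ?thesis using 1 2 s by (meson mult_left_mono order.trans)
    qed
  qed
qed

definition xbd :: "nat \<Rightarrow> real \<Rightarrow> real \<Rightarrow> 'a::real_normed_field vser \<Rightarrow> bool" where
  "xbd m B M x \<longleftrightarrow> (\<forall>u i. norm (x u i) \<le>
      (if set u \<subseteq> {0..m} \<and> i \<in> {1..m} then B * M ^ length u * fact (length u) else 0))"

lemma comp_bound:
  assumes "xbd m B M x" "i \<le> m" "0 \<le> B" "0 < M"
  shows "norm (comp i x u) \<le> (if set u \<subseteq> {0..m} then B * M ^ length u * fact (length u) else 0)"
proof (cases "i = 0")
  case True then show ?thesis using assms by (simp add: Defs.comp_def)
next
  case False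
  then have "i \<in> {1..m}" using assms by auto
  moreover have "norm (x u i) \<le> (if set u \<subseteq> {0..m} \<and> i \<in> {1..m} then B * M ^ length u * fact (length u) else 0)"
    using assms(1) unfolding xbd_def by blast
  ultimately show ?thesis using False by (simp add: Defs.comp_def)
qed

lemma phiw_Cons_eq: "phiw d (i # \<eta>) e w = pre i (phiw d \<eta> e) w + pre 0 (ssh (comp i d) (phiw d \<eta> e)) w"
  by (simp add: phi1_def)

lemma comp_smul: fixes x :: "'a::comm_ring_1 vser" shows "comp i (smul t x) = (\<lambda>u. t * comp i x u)"
  by (rule ext) (auto simp: Defs.comp_def smul_def)

lemma ssh_comp_smul: fixes x :: "'a::comm_ring_1 vser" shows "ssh (comp i (smul t x)) e = ssh (comp i x) (\<lambda>v. t * e v)"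
  by (rule ext) (simp add: comp_smul ssh_smult1 ssh_smult2)

lemma chr_Cons: "chr (i # \<eta>) w = pre i (chr \<eta>) w"
  by (cases w) (auto simp: chr_def)

lemma phiw_zero: "phiw (0::'a::comm_ring_1 vser) \<eta> (chr []) = chr \<eta>"
proof (induction \<eta>)
  case Nil then show ?case by simp
next
  case (Cons i \<eta>)
  have c0: "comp i (0::'a vser) = (\<lambda>u. 0)" by (auto simp: Defs.comp_def)
  have s0: "ssh (\<lambda>u. 0::'a) e = (\<lambda>w. 0)" for e by (rule ext) (simp add: ssh_zero1)
  show ?case
  proof
    fix w
    have "phiw (0::'a vser) (i # \<eta>) (chr []) w = pre i (chr \<eta>) w + pre 0 (ssh (comp i (0::'a vser)) (chr \<eta>)) w"
      by (simp only: phiw_Cons_eq Cons)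
    also have "\<dots> = chr (i # \<eta>) w" by (simp only: c0 s0 chr_Cons) (simp add: pre_def split: list.splits)
    finally show "phiw (0::'a vser) (i # \<eta>) (chr []) w = chr (i # \<eta>) w" .
  qed
qed

lemma chr_bound:
  assumes "set \<eta> \<subseteq> {0..m}" "1 \<le> A"
  shows "norm (chr \<eta> w :: 'a::real_normed_field) \<le> gb m A (length \<eta>) w"
  using assms by (auto simp: chr_def gb_def)

lemma ssh_comp_chr: fixes x :: "'a::comm_ring_1 vser" shows
  "ssh (comp i x) e w = (if i = 0 then 0 else ssh e (comp i x) w)"
proof (cases "i = 0")
  case True
  then have "comp i x = (\<lambda>u. 0)" by (auto simp: Defs.comp_def)
  then show ?thesis using True by (simp add: ssh_zero1)
qed (simp add: ssh_comm)

lemma wpl_Cons_eq: fixes x :: "'a::comm_ring_1 vser" shows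
  "wpl x (i # \<eta>) w = pre i (wpl x \<eta>) w + pre 0 (ssh (comp i x) (chr \<eta>)) w"
  by (cases w) (simp_all add: ssh_comp_chr)

context
  fixes x :: "'a::real_normed_field vser" and m :: nat and B M A :: real
  assumes xb: "xbd m B M x" and B: "0 \<le> B" and M: "0 < M" and A: "A = 2 * M + 1 + 2 * B"
begin

lemma A1: "1 \<le> A" and AM: "2 * M \<le> A" and AB: "1 + 2 * B \<le> A"
  using A B M by auto

lemma D_bound:
  assumes "norm t \<le> 1" "set \<eta> \<subseteq> {0..m}"
  shows "norm (phiw (smul t x) \<eta> (chr []) w) \<le> 1 * gb m A (length \<eta>) w"
  using assms(2)
proof (induction \<eta> arbitrary: w)
  case Nil then show ?case using chr_bound[of "[]" m A] A1 by simp
next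
  case (Cons i \<eta>)
  have im: "i \<le> m" using Cons.prems by auto
  have IH: "norm (phiw (smul t x) \<eta> (chr []) v) \<le> 1 * gb m A (length \<eta>) v" for v
    using Cons by auto
  have IH2: "norm (t * phiw (smul t x) \<eta> (chr []) v) \<le> 1 * gb m A (length \<eta>) v" for v
    using IH[of v] assms(1) by (simp add: norm_mult mult_le_one order.trans[OF mult_left_le_one_le] A1 gb_nonneg norm_ge_zero) 
  show ?case
    unfolding phiw_Cons_eq ssh_comp_smul
    using step_bound[OF im M B AM AB _ comp_bound[OF xb im B M] IH IH2] by simp
qed

lemma Del_bound:
  assumes "norm t \<le> 1" "set \<eta> \<subseteq> {0..m}"
  shows "norm (phiw (smul t x) \<eta> (chr []) w - chr \<eta> w) \<le> norm t * gb m A (length \<eta>) w"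
  using assms(2)
proof (induction \<eta> arbitrary: w)
  case Nil then show ?case using A1 by (simp add: gb_nonneg)
next
  case (Cons i \<eta>)
  have im: "i \<le> m" using Cons.prems by auto
  have IH: "norm (phiw (smul t x) \<eta> (chr []) v - chr \<eta> v) \<le> norm t * gb m A (length \<eta>) v" for v
    using Cons by auto
  have IH2: "norm (t * phiw (smul t x) \<eta> (chr []) v) \<le> norm t * gb m A (length \<eta>) v" for v
    using D_bound[OF assms(1), of \<eta> v] Cons.prems by (simp add: norm_mult mult_left_mono)
  have eq: "phiw (smul t x) (i # \<eta>) (chr []) w - chr (i # \<eta>) w =
      pre i (\<lambda>v. phiw (smul t x) \<eta> (chr []) v - chr \<eta> v) w + pre 0 (ssh (comp i x) (\<lambda>v. t * phiw (smul t x) \<eta> (chr []) v)) w"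
    unfolding phiw_Cons_eq ssh_comp_smul chr_Cons by (cases w) auto
  show ?case
    unfolding eq
    using step_bound[OF im M B AM AB _ comp_bound[OF xb im B M] IH IH2] by simp
qed

lemma E_bound:
  assumes "norm t \<le> 1" "set \<eta> \<subseteq> {0..m}"
  shows "norm (phiw (smul t x) \<eta> (chr []) w - chr \<eta> w - t * wpl x \<eta> w) \<le> norm t ^ 2 * gb m A (length \<eta>) w"
  using assms(2)
proof (induction \<eta> arbitrary: w)
  case Nil then show ?case using A1 by (simp add: gb_nonneg)
next
  case (Cons i \<eta>)
  have im: "i \<le> m" using Cons.prems by auto
  have IH: "norm (phiw (smul t x) \<eta> (chr []) v - chr \<eta> v - t * wpl x \<eta> v) \<le> norm t ^ 2 * gb m A (length \<eta>) v" for v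
    using Cons by auto
  have IH2: "norm (t * (phiw (smul t x) \<eta> (chr []) v - chr \<eta> v)) \<le> norm t ^ 2 * gb m A (length \<eta>) v" for v
    using Del_bound[OF assms(1), of \<eta> v] Cons.prems by (simp add: norm_mult mult_left_mono power2_eq_square mult.assoc)
  have eq: "phiw (smul t x) (i # \<eta>) (chr []) w - chr (i # \<eta>) w - t * wpl x (i # \<eta>) w =
      pre i (\<lambda>v. phiw (smul t x) \<eta> (chr []) v - chr \<eta> v - t * wpl x \<eta> v) w
      + pre 0 (ssh (comp i x) (\<lambda>v. t * (phiw (smul t x) \<eta> (chr []) v - chr \<eta> v))) w"
    unfolding phiw_Cons_eq ssh_comp_smul chr_Cons wpl_Cons_eq
    by (cases w) (auto simp: ssh_smult2 ssh_diff2 algebra_simps)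
  have nt: "0 \<le> norm t ^ 2" by simp
  show ?case
    unfolding eq
    using step_bound[OF im M B AM AB nt comp_bound[OF xb im B M] IH IH2] by simp
qed

lemma W_bound:
  assumes "set \<eta> \<subseteq> {0..m}"
  shows "norm (wpl x \<eta> w) \<le> 1 * gb m A (length \<eta>) w"
  using assms
proof (induction \<eta> arbitrary: w)
  case Nil then show ?case using A1 by (simp add: gb_nonneg)
next
  case (Cons i \<eta>)
  have im: "i \<le> m" using Cons.prems by auto
  have IH: "norm (wpl x \<eta> v) \<le> 1 * gb m A (length \<eta>) v" for v
    using Cons by auto
  have IH2: "norm (chr \<eta> v :: 'a) \<le> 1 * gb m A (length \<eta>) v" for v
    using chr_bound[of \<eta> m A v] Cons.prems A1 by simp
  show ?case
    unfolding wpl_Cons_eq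
    using step_bound[OF im M B AM AB _ comp_bound[OF xb im B M] IH IH2] by simp
qed

end


lemma card_T: "real (card {\<eta>. set \<eta> \<subseteq> {0..m} \<and> length \<eta> \<le> n}) \<le> 2 ^ n * (real m + 1) ^ n"
proof -
  have "card {\<eta>. set \<eta> \<subseteq> {0..m} \<and> length \<eta> \<le> n} = (\<Sum>i\<le>n. (m + 1) ^ i)"
    by (subst card_lists_length_le) auto
  also have "\<dots> \<le> (\<Sum>i\<le>n. (m + 1) ^ n)"
    by (intro sum_mono power_increasing) auto
  also have "\<dots> = Suc n * (m + 1) ^ n" by simp
  also have "\<dots> \<le> 2 ^ n * (m + 1) ^ n"
  proof -
    have "Suc n \<le> 2 ^ n" using less_exp[of n] by (simp add: Suc_le_eq)
    then show ?thesis by (intro mult_right_mono) auto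
  qed
  finally have "card {\<eta>. set \<eta> \<subseteq> {0..m} \<and> length \<eta> \<le> n} \<le> 2 ^ n * (m + 1) ^ n" .
  then have "real (card {\<eta>. set \<eta> \<subseteq> {0..m} \<and> length \<eta> \<le> n}) \<le> real (2 ^ n * (m + 1) ^ n)"
    by (simp only: of_nat_le_iff)
  then show ?thesis by (simp add: add.commute)
qed

lemma agg_bound:
  fixes c :: "'a::real_normed_field vser" and F :: "nat list \<Rightarrow> nat list \<Rightarrow> 'a"
  assumes cb: "xbd m K Mc c" and K: "0 \<le> K" and Mc: "0 < Mc" and A1: "1 \<le> A" and s: "0 \<le> s"
    and hF: "\<And>\<eta> v. set \<eta> \<subseteq> {0..m} \<Longrightarrow> norm (F \<eta> v) \<le> s * gb m A (length \<eta>) v"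
  shows "norm (\<Sum>\<eta>\<in>{\<eta>. set \<eta> \<subseteq> {0..m} \<and> length \<eta> \<le> length w}. c \<eta> j * F \<eta> w)
     \<le> (if set w \<subseteq> {0..m} \<and> j \<in> {1..m} then s * K * (2 * (real m + 1) * max 1 Mc * A) ^ length w * fact (length w) else 0)"
proof -
  define T where "T = {\<eta>. set \<eta> \<subseteq> {0..m} \<and> length \<eta> \<le> length w}"
  define n where "n = length w"
  define Q where "Q = max 1 Mc"
  have Q1: "1 \<le> Q" "Mc \<le> Q" unfolding Q_def by auto
  have fT: "finite T" unfolding T_def by (rule finite_lists_length_le) simp
  have trm: "norm (c \<eta> j * F \<eta> w) \<le> (if set w \<subseteq> {0..m} \<and> j \<in> {1..m} then s * K * Q ^ n * A ^ n * fact n else 0)"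
    if "\<eta> \<in> T" for \<eta>
  proof -
    have eg: "set \<eta> \<subseteq> {0..m}" and pn: "length \<eta> \<le> n" using that unfolding T_def n_def by auto
    have cb': "norm (c \<eta> j) \<le> (if j \<in> {1..m} then K * Mc ^ length \<eta> * fact (length \<eta>) else 0)"
    proof -
      have "norm (c \<eta> j) \<le> (if set \<eta> \<subseteq> {0..m} \<and> j \<in> {1..m} then K * Mc ^ length \<eta> * fact (length \<eta>) else 0)"
        using cb unfolding xbd_def by blast
      then show ?thesis using eg by simp
    qed
    have Fb: "norm (F \<eta> w) \<le> s * gb m A (length \<eta>) w" using hF[OF eg] .
    show ?thesis
    proof (cases "set w \<subseteq> {0..m} \<and> j \<in> {1..m}")
      case False
      then have "norm (c \<eta> j) = 0 \<or> gb m A (length \<eta>) w = 0"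
        using cb' by (auto simp: gb_def)
      then have "norm (c \<eta> j * F \<eta> w) = 0"
        using Fb by (auto simp: norm_mult)
      then show ?thesis using False by (simp only: if_False order_refl)
    next
      case True
      have "norm (c \<eta> j * F \<eta> w) \<le> (K * Mc ^ length \<eta> * fact (length \<eta>)) * (s * (A ^ n * fact n / fact (length \<eta>)))"
        unfolding norm_mult
        using cb' Fb True pn K Mc by (intro mult_mono) (auto simp: gb_def n_def)
      also have "\<dots> = s * K * Mc ^ length \<eta> * A ^ n * fact n" by simp
      also have "\<dots> \<le> s * K * Q ^ n * A ^ n * fact n"
      proof -
        have "Mc ^ length \<eta> \<le> Q ^ length \<eta>" using Q1 Mc by (intro power_mono) auto
        also have "\<dots> \<le> Q ^ n" using Q1 pn by (intro power_increasing) auto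
        finally show ?thesis using s K A1 by (intro mult_right_mono mult_left_mono) auto
      qed
      finally show ?thesis using True by simp
    qed
  qed
  have "norm (\<Sum>\<eta>\<in>T. c \<eta> j * F \<eta> w) \<le> (\<Sum>\<eta>\<in>T. norm (c \<eta> j * F \<eta> w))"
    by (rule norm_sum)
  also have "\<dots> \<le> (\<Sum>\<eta>\<in>T. (if set w \<subseteq> {0..m} \<and> j \<in> {1..m} then s * K * Q ^ n * A ^ n * fact n else 0))"
    by (rule sum_mono) (rule trm)
  also have "\<dots> = real (card T) * (if set w \<subseteq> {0..m} \<and> j \<in> {1..m} then s * K * Q ^ n * A ^ n * fact n else 0)"
    by simp
  also have "\<dots> \<le> (if set w \<subseteq> {0..m} \<and> j \<in> {1..m} then s * K * (2 * (real m + 1) * Q * A) ^ n * fact n else 0)"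
  proof (cases "set w \<subseteq> {0..m} \<and> j \<in> {1..m}")
    case True
    have "real (card T) * (s * K * Q ^ n * A ^ n * fact n) \<le> (2 ^ n * (real m + 1) ^ n) * (s * K * Q ^ n * A ^ n * fact n)"
      using card_T[of m n] s K Q1 A1 unfolding T_def n_def by (intro mult_right_mono) auto
    also have "\<dots> = s * K * (2 * (real m + 1) * Q * A) ^ n * fact n"
      by (simp only: power_mult_distrib ac_simps)
    finally show ?thesis using True by simp
  qed (simp only: if_False order_refl mult_zero_right)
  finally show ?thesis unfolding T_def n_def Q_def .
qed

lemma pack_EM:
  fixes z :: "'a::real_normed_field vser"
  assumes R: "0 < R" and C: "0 \<le> C"
    and hz: "\<And>w j. norm (z w j) \<le> (if set w \<subseteq> {0..m} \<and> j \<in> {1..m} then C * R ^ length w * fact (length w) else 0)"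
  shows "z \<in> EM m R" "snorm R z \<le> C"
proof -
  have zs: "z \<in> ser m"
    unfolding ser_def
  proof (intro CollectI allI impI)
    fix w i assume "\<not> set w \<subseteq> {0..m} \<or> i \<notin> {1..m}"
    then have cc: "\<not> (set w \<subseteq> {0..m} \<and> i \<in> {1..m})" by blast
    have "norm (z w i) \<le> 0" using hz[of w i] by (simp only: cc if_False)
    then show "z w i = 0" by simp
  qed
  have hz': "norm (z w j) \<le> C * R ^ length w * fact (length w)" for w j
  proof (cases "set w \<subseteq> {0..m} \<and> j \<in> {1..m}")
    case True then show ?thesis using hz[of w j] by simp
  next
    case False
    have "norm (z w j) \<le> 0" using hz[of w j] by (simp only: False if_False)
    also have "0 \<le> C * R ^ length w * fact (length w)" using C R by simp
    finally show ?thesis .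
  qed
  then have "growth_bdd R z" unfolding growth_bdd_def by blast
  then show "z \<in> EM m R" using zs unfolding EM_def by blast
  show "snorm R z \<le> C"
    unfolding snorm_def
  proof (rule cSup_least)
    show "{norm (z w i) / (R ^ length w * fact (length w)) |w i. True} \<noteq> {}" by blast
  next
    fix r assume "r \<in> {norm (z w i) / (R ^ length w * fact (length w)) |w i. True}"
    then obtain w i where r: "r = norm (z w i) / (R ^ length w * fact (length w))" by blast
    have pos: "0 < R ^ length w * fact (length w)" using R by simp
    show "r \<le> C" unfolding r using hz'[of w i] pos by (simp add: divide_le_eq mult.assoc)
  qed
qed


lemma xbd_of_EM:
  fixes c :: "'a::real_normed_field vser"
  assumes "c \<in> EM m M"
  shows "\<exists>K\<ge>0. xbd m K M c"
proof -
  from assms obtain K where K: "\<And>w i. norm (c w i) \<le> K * M ^ length w * fact (length w)" and cs: "c \<in> ser m"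
    unfolding EM_def growth_bdd_def by blast
  have K0: "0 \<le> K" using K[of "[]" 0] by (simp add: order.trans[OF norm_ge_zero])
  moreover have "xbd m K M c"
    unfolding xbd_def
  proof (intro allI)
    fix u i
    show "norm (c u i) \<le> (if set u \<subseteq> {0..m} \<and> i \<in> {1..m} then K * M ^ length u * fact (length u) else 0)"
    proof (cases "set u \<subseteq> {0..m} \<and> i \<in> {1..m}")
      case True then show ?thesis using K by simp
    next
      case False
      then have "c u i = 0" using cs unfolding ser_def by blast
      then show ?thesis using False by (simp only: if_False norm_zero order_refl)
    qed
  qed
  ultimately show ?thesis by blast
qed

lemma LC_EM: "c \<in> LC m \<Longrightarrow> \<exists>M>0. \<exists>K\<ge>0. xbd m K M c"
  unfolding LC_def using xbd_of_EM by blast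

lemma EM_LC: "0 < M \<Longrightarrow> c \<in> EM m M \<Longrightarrow> c \<in> LC m"
  unfolding LC_def by blast

lemma xbd_D: "xbd m K M c \<Longrightarrow> norm (c u i) \<le> (if set u \<subseteq> {0..m} \<and> i \<in> {1..m} then K * M ^ length u * fact (length u) else 0)"
  unfolding xbd_def by blast

lemma xbd_I: "(\<And>u i. set u \<subseteq> {0..m} \<Longrightarrow> i \<in> {1..m} \<Longrightarrow> norm (c u i) \<le> K * M ^ length u * fact (length u))
   \<Longrightarrow> (\<And>u i. \<not> (set u \<subseteq> {0..m} \<and> i \<in> {1..m}) \<Longrightarrow> c u i = 0) \<Longrightarrow> xbd m K M c"
  unfolding xbd_def by auto

lemma xbd_D1: "xbd m K M c \<Longrightarrow> set u \<subseteq> {0..m} \<Longrightarrow> i \<in> {1..m} \<Longrightarrow> norm (c u i) \<le> K * M ^ length u * fact (length u)"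
  using xbd_D[of m K M c u i] by simp

lemma xbd_D0: "xbd m K M c \<Longrightarrow> \<not> (set u \<subseteq> {0..m} \<and> i \<in> {1..m}) \<Longrightarrow> c u i = 0"
  using xbd_D[of m K M c u i] by (simp only: if_False) simp

lemma xbd_mono:
  assumes h: "xbd m K M c" and K: "0 \<le> K" and M: "0 < M" and MM: "M \<le> M'" and KK: "K \<le> K'"
  shows "xbd m K' M' c"
proof (rule xbd_I)
  fix u i assume "set u \<subseteq> {0..m}" "i \<in> {1..m}"
  then have "norm (c u i) \<le> K * M ^ length u * fact (length u)" by (rule xbd_D1[OF h])
  also have "\<dots> \<le> K' * M' ^ length u * fact (length u)"
    using K M MM KK by (intro mult_right_mono mult_mono power_mono) auto
  finally show "norm (c u i) \<le> K' * M' ^ length u * fact (length u)" .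
qed (rule xbd_D0[OF h])

lemma xbd_LC: "xbd m K M c \<Longrightarrow> 0 \<le> K \<Longrightarrow> 0 < M \<Longrightarrow> c \<in> LC m"
  using pack_EM[of M K c m] EM_LC[of M c m] unfolding xbd_def by blast

lemma xbd_add:
  assumes "xbd m K M c" "xbd m K' M d"
  shows "xbd m (K + K') M (c + d)"
proof (rule xbd_I)
  fix u i assume "set u \<subseteq> {0..m}" "i \<in> {1..m}"
  then have "norm (c u i) \<le> K * M ^ length u * fact (length u)" "norm (d u i) \<le> K' * M ^ length u * fact (length u)"
    using xbd_D1[OF assms(1)] xbd_D1[OF assms(2)] by auto
  then show "norm ((c + d) u i) \<le> (K + K') * M ^ length u * fact (length u)"
    by (simp add: algebra_simps order.trans[OF norm_triangle_ineq])
next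
  fix u i assume "\<not> (set u \<subseteq> {0..m} \<and> i \<in> {1..m})"
  then show "(c + d) u i = 0" using xbd_D0[OF assms(1)] xbd_D0[OF assms(2)] by simp
qed

lemma LC_add: assumes "c \<in> LC m" "d \<in> LC m" shows "c + d \<in> LC m"
proof -
  obtain M K where MK: "0 < M" "0 \<le> K" "xbd m K M c" using LC_EM[OF assms(1)] by blast
  obtain M' K' where MK': "0 < M'" "0 \<le> K'" "xbd m K' M' d" using LC_EM[OF assms(2)] by blast
  have "xbd m K (max M M') c" "xbd m K' (max M M') d"
    using xbd_mono[OF MK(3) MK(2) MK(1)] xbd_mono[OF MK'(3) MK'(2) MK'(1)] by auto
  then have "xbd m (K + K') (max M M') (c + d)" by (rule xbd_add)
  then show ?thesis by (rule xbd_LC) (use MK MK' in auto)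
qed

lemma xbd_smul:
  assumes "xbd m K M c"
  shows "xbd m (norm a * K) M (smul a c)"
proof (rule xbd_I)
  fix u i assume "set u \<subseteq> {0..m}" "i \<in> {1..m}"
  then have "norm (c u i) \<le> K * M ^ length u * fact (length u)" by (rule xbd_D1[OF assms])
  then have "norm a * norm (c u i) \<le> norm a * (K * M ^ length u * fact (length u))"
    by (intro mult_left_mono) auto
  then show "norm (smul a c u i) \<le> norm a * K * M ^ length u * fact (length u)"
    by (simp add: smul_def norm_mult mult.assoc)
next
  fix u i assume "\<not> (set u \<subseteq> {0..m} \<and> i \<in> {1..m})"
  then show "smul a c u i = 0" using xbd_D0[OF assms] by (simp add: smul_def)
qed

lemma LC_smul: assumes "c \<in> LC m" shows "smul a c \<in> LC m"
proof -
  obtain M K where MK: "0 < M" "0 \<le> K" "xbd m K M c" using LC_EM[OF assms(1)] by blast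
  show ?thesis by (rule xbd_LC[OF xbd_smul[OF MK(3)]]) (use MK in auto)
qed

lemma LC_zero: "(0::'a::real_normed_field vser) \<in> LC m"
  by (rule xbd_LC[of m 0 1]) (auto simp: xbd_def)

lemma snorm_coeff:
  fixes c :: "'a::real_normed_field vser"
  assumes "0 < M" "c \<in> EM m M"
  shows "norm (c w i) \<le> snorm M c * (M ^ length w * fact (length w))"
proof -
  from assms obtain K where K: "\<And>w i. norm (c w i) \<le> K * M ^ length w * fact (length w)"
    unfolding EM_def growth_bdd_def by blast
  have pos: "\<And>w. 0 < M ^ length w * fact (length w)" using assms by simp
  have "bdd_above {norm (c w i) / (M ^ length w * fact (length w)) |w i. True}"
    unfolding bdd_above_def
  proof (intro exI[of _ K] ballI)
    fix r assume "r \<in> {norm (c w i) / (M ^ length w * fact (length w)) |w i. True}"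
    then obtain w i where r: "r = norm (c w i) / (M ^ length w * fact (length w))" by blast
    show "r \<le> K" unfolding r using K[of w i] pos[of w] by (simp add: divide_le_eq mult.assoc)
  qed
  then have "norm (c w i) / (M ^ length w * fact (length w)) \<le> snorm M c"
    unfolding snorm_def by (rule cSup_upper[rotated]) blast
  then show ?thesis using pos[of w] by (simp add: divide_le_eq)
qed

lemma coord_open:
  fixes L :: "'a::real_normed_field vser"
  assumes r: "0 < r"
  shows "silva_open m {u \<in> LC m. norm (u w i - L w i) < r}"
  unfolding silva_open_def
proof (intro conjI ballI)
  show "{u \<in> LC m. norm (u w i - L w i) < r} \<subseteq> LC m" by blast
next
  fix u assume u: "u \<in> {u \<in> LC m. norm (u w i - L w i) < r}"
  define \<rho> where "\<rho> = r - norm (u w i - L w i)"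
  have \<rho>: "0 < \<rho>" using u unfolding \<rho>_def by simp
  define V where "V = {v \<in> (LC m :: 'a vser set). norm (v w i) < \<rho>}"
  have "zero_nbhd m V"
    unfolding zero_nbhd_def absconv_def
  proof (intro conjI allI impI)
    show "V \<subseteq> LC m" unfolding V_def by blast
  next
    fix a :: 'a and v :: "'a vser" assume v: "v \<in> V" and a: "norm a \<le> 1"
    have "norm (a * v w i) \<le> norm (v w i)"
      using a by (simp add: norm_mult mult_left_le_one_le)
    then show "smul a v \<in> V" using v LC_smul[of v m a] unfolding V_def smul_def by auto
  next
    fix u' v :: "'a vser" and l :: real
    assume u': "u' \<in> V" and v: "v \<in> V" and l0: "0 \<le> l" and l1: "l \<le> 1"
    have LCs: "smul (of_real l) u' + smul (of_real (1 - l)) v \<in> LC m"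
      using u' v LC_add LC_smul unfolding V_def by blast
    have "norm (of_real l * u' w i + of_real (1 - l) * v w i) \<le> l * norm (u' w i) + (1 - l) * norm (v w i)"
      using l0 l1 by (intro order.trans[OF norm_triangle_ineq]) (simp add: norm_mult del: of_real_diff)
    also have "\<dots> < \<rho>"
    proof (cases "l = 0")
      case True then show ?thesis using v unfolding V_def by simp
    next
      case False
      then have "l * norm (u' w i) < l * \<rho>" using l0 u' unfolding V_def by simp
      moreover have "(1 - l) * norm (v w i) \<le> (1 - l) * \<rho>" using l1 v unfolding V_def by (intro mult_left_mono) auto
      ultimately show ?thesis by (simp add: algebra_simps)
    qed
    finally show "smul (of_real l) u' + smul (of_real (1 - l)) v \<in> V"
      using LCs unfolding V_def smul_def by simp
  next
    fix M :: real assume M: "0 < M"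
    define \<epsilon> where "\<epsilon> = \<rho> / (M ^ length w * fact (length w))"
    have pos: "0 < M ^ length w * fact (length w)" using M by simp
    have "0 < \<epsilon>" using \<rho> pos unfolding \<epsilon>_def by simp
    moreover have "c \<in> V" if c: "c \<in> EM m M" "snorm M c < \<epsilon>" for c
    proof -
      have "norm (c w i) \<le> snorm M c * (M ^ length w * fact (length w))" by (rule snorm_coeff[OF M c(1)])
      also have "\<dots> < \<epsilon> * (M ^ length w * fact (length w))" using c(2) pos by (rule mult_strict_right_mono)
      also have "\<dots> = \<rho>" unfolding \<epsilon>_def using pos M by simp
      finally show ?thesis using EM_LC[OF M c(1)] unfolding V_def by simp
    qed
    ultimately show "\<exists>\<epsilon>>0. \<forall>c\<in>EM m M. snorm M c < \<epsilon> \<longrightarrow> c \<in> V" by blast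
  qed
  moreover have "\<forall>v\<in>V. u + v \<in> {u \<in> LC m. norm (u w i - L w i) < r}"
  proof
    fix v assume v: "v \<in> V"
    have "norm ((u + v) w i - L w i) \<le> norm (u w i - L w i) + norm (v w i)"
      by (simp add: norm_triangle_ineq[of "u w i - L w i" "v w i", simplified algebra_simps] algebra_simps)
    also have "\<dots> < r" using v unfolding V_def \<rho>_def by simp
    finally show "u + v \<in> {u \<in> LC m. norm (u w i - L w i) < r}"
      using LC_add[of u m v] u v unfolding V_def by simp
  qed
  ultimately show "\<exists>V. zero_nbhd m V \<and> (\<forall>v\<in>V. u + v \<in> {u \<in> LC m. norm (u w i - L w i) < r})" by blast
qed

lemma silva_unique:
  fixes f :: "'b \<Rightarrow> 'a::real_normed_field vser"
  assumes F: "F \<noteq> bot" and t1: "silva_tendsto m f L1 F" and t2: "silva_tendsto m f L2 F"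
  shows "L1 = L2"
proof (rule ccontr)
  assume ne: "L1 \<noteq> L2"
  then obtain w i where wi: "L1 w i \<noteq> L2 w i" by (meson ext)
  define r where "r = norm (L1 w i - L2 w i) / 2"
  have r: "0 < r" using wi unfolding r_def by simp
  have L1: "L1 \<in> LC m" and L2: "L2 \<in> LC m" using t1 t2 unfolding silva_tendsto_def by auto
  have e1: "eventually (\<lambda>t. f t \<in> {u \<in> LC m. norm (u w i - L1 w i) < r}) F"
    using t1 coord_open[OF r, of m w i L1] L1 r unfolding silva_tendsto_def by auto
  have e2: "eventually (\<lambda>t. f t \<in> {u \<in> LC m. norm (u w i - L2 w i) < r}) F"
    using t2 coord_open[OF r, of m w i L2] L2 r unfolding silva_tendsto_def by auto
  have "eventually (\<lambda>t. False) F"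
    using e1 e2
  proof eventually_elim
    case (elim t)
    have "norm (L1 w i - L2 w i) \<le> norm (f t w i - L1 w i) + norm (f t w i - L2 w i)"
      using norm_triangle_ineq4[of "f t w i - L2 w i" "f t w i - L1 w i"] by (simp add: algebra_simps norm_minus_commute)
    also have "\<dots> < 2 * r" using elim by simp
    finally show False unfolding r_def by simp
  qed
  then show False using F by (simp add: eventually_False)
qed

lemma silva_const:
  assumes "K \<in> LC m" "eventually (\<lambda>t. f t = K) F"
  shows "silva_tendsto m f K F"
  unfolding silva_tendsto_def
proof (intro conjI allI impI)
  fix U assume "silva_open m U" "K \<in> U"
  then show "eventually (\<lambda>t. f t \<in> U) F" using assms(2) by (auto elim: eventually_mono)
qed (rule assms(1))


lemma smul_apply: "smul t c w i = t * c w i" by (simp add: smul_def)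

lemma prelie_bound:
  fixes x c :: "'a::real_normed_field vser"
  assumes xb: "xbd m B M x" and B: "0 \<le> B" and M: "0 < M"
    and cb: "xbd m K Mc c" and K: "0 \<le> K" and Mc: "0 < Mc"
  shows "norm (prelie m c x w j) \<le> (if set w \<subseteq> {0..m} \<and> j \<in> {1..m} then 1 * K *
      (2 * (real m + 1) * max 1 Mc * (2 * M + 1 + 2 * B)) ^ length w * fact (length w) else 0)"
  unfolding prelie_def
  by (rule agg_bound[OF cb K Mc _ _ W_bound[OF xb B M refl]]) (use B M in auto)

lemma prelie_LC:
  fixes x c :: "'a::real_normed_field vser"
  assumes "x \<in> LC m" "c \<in> LC m"
  shows "prelie m c x \<in> LC m"
proof -
  obtain M B where MB: "0 < M" "0 \<le> B" "xbd m B M x" using LC_EM[OF assms(1)] by blast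
  obtain Mc K where MK: "0 < Mc" "0 \<le> K" "xbd m K Mc c" using LC_EM[OF assms(2)] by blast
  define R where "R = 2 * (real m + 1) * max 1 Mc * (2 * M + 1 + 2 * B)"
  have R: "0 < R" unfolding R_def using MB by (simp add: add_pos_nonneg)
  have "prelie m c x \<in> EM m R"
  proof (rule pack_EM(1)[OF R, of "1 * K"])
    show "0 \<le> 1 * K" using MK by simp
    show "norm (prelie m c x w j) \<le> (if set w \<subseteq> {0..m} \<and> j \<in> {1..m} then 1 * K * R ^ length w * fact (length w) else 0)" for w j
      using prelie_bound[OF MB(3) MB(2) MB(1) MK(3) MK(2) MK(1)] unfolding R_def .
  qed
  then show ?thesis by (rule EM_LC[OF R])
qed

lemma livf_limit:
  fixes x c :: "'a::real_normed_field vser"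
  assumes xL: "x \<in> LC m" and cL: "c \<in> LC m"
  shows "silva_tendsto m (\<lambda>t. smul (inverse t) (gprod m c (0 + smul t x) - gprod m c 0)) (x + prelie m c x) (at 0)"
proof -
  obtain M B where MB: "0 < M" "0 \<le> B" "xbd m B M x" using LC_EM[OF xL] by blast
  obtain Mc K where MK: "0 < Mc" "0 \<le> K" "xbd m K Mc c" using LC_EM[OF cL] by blast
  define A where "A = 2 * M + 1 + 2 * B"
  define R where "R = 2 * (real m + 1) * max 1 Mc * A"
  have A1: "1 \<le> A" unfolding A_def using MB by simp
  have R: "0 < R" unfolding R_def using A1 by (simp add: add_pos_nonneg)
  define L where "L = x + prelie m c x"
  have LL: "L \<in> LC m" unfolding L_def by (rule LC_add[OF xL prelie_LC[OF xL cL]])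
  define q where "q = (\<lambda>t. smul (inverse t) (gprod m c (0 + smul t x) - gprod m c 0))"
  define T where "T = (\<lambda>w::nat list. {\<eta>. set \<eta> \<subseteq> {0..m} \<and> length \<eta> \<le> length w})"
  have ident: "(q t - L) w j = (\<Sum>\<eta>\<in>T w. c \<eta> j * (inverse t * (phiw (smul t x) \<eta> (chr []) w - chr \<eta> w - t * wpl x \<eta> w)))"
    if t0: "t \<noteq> 0" for t w j
  proof -
    have "(q t - L) w j = inverse t * ((t * x w j + (\<Sum>\<eta>\<in>T w. c \<eta> j * phiw (smul t x) \<eta> (chr []) w))
             - (\<Sum>\<eta>\<in>T w. c \<eta> j * chr \<eta> w)) - (x w j + (\<Sum>\<eta>\<in>T w. c \<eta> j * wpl x \<eta> w))"
      unfolding q_def L_def by (simp add: smul_apply gprod_def mixcomp_def prelie_def phiw_zero T_def)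
    also have "\<dots> = inverse t * (\<Sum>\<eta>\<in>T w. c \<eta> j * phiw (smul t x) \<eta> (chr []) w)
        - inverse t * (\<Sum>\<eta>\<in>T w. c \<eta> j * chr \<eta> w) - (\<Sum>\<eta>\<in>T w. c \<eta> j * wpl x \<eta> w)"
      using t0 by (simp add: field_simps)
    also have "\<dots> = (\<Sum>\<eta>\<in>T w. inverse t * (c \<eta> j * phiw (smul t x) \<eta> (chr []) w)
        - inverse t * (c \<eta> j * chr \<eta> w) - c \<eta> j * wpl x \<eta> w)"
      by (simp add: sum_subtractf sum_distrib_left)
    also have "\<dots> = (\<Sum>\<eta>\<in>T w. c \<eta> j * (inverse t * (phiw (smul t x) \<eta> (chr []) w - chr \<eta> w - t * wpl x \<eta> w)))"
      using t0 by (intro sum.cong refl) (simp add: field_simps)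
    finally show ?thesis .
  qed
  have zb: "norm ((q t - L) w j) \<le> (if set w \<subseteq> {0..m} \<and> j \<in> {1..m} then norm t * K * R ^ length w * fact (length w) else 0)"
    if t0: "t \<noteq> 0" and t1: "norm t \<le> 1" for t w j
  proof -
    have hF: "norm (inverse t * (phiw (smul t x) \<eta> (chr []) v - chr \<eta> v - t * wpl x \<eta> v)) \<le> norm t * gb m A (length \<eta>) v"
      if "set \<eta> \<subseteq> {0..m}" for \<eta> v
    proof -
      have "norm (inverse t * (phiw (smul t x) \<eta> (chr []) v - chr \<eta> v - t * wpl x \<eta> v))
          \<le> inverse (norm t) * (norm t ^ 2 * gb m A (length \<eta>) v)"
        unfolding norm_mult norm_inverse
        by (rule mult_left_mono[OF E_bound[OF MB(3) MB(2) MB(1) A_def t1 that]]) simp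
      also have "\<dots> = norm t * gb m A (length \<eta>) v" using t0 by (simp add: power2_eq_square)
      finally show ?thesis .
    qed
    show ?thesis unfolding ident[OF t0] T_def R_def
      by (rule agg_bound[OF MK(3) MK(2) MK(1) A1 _ hF]) simp_all
  qed
  show ?thesis
    unfolding silva_tendsto_def q_def[symmetric] L_def[symmetric]
  proof (intro conjI allI impI)
    show "L \<in> LC m" by (rule LL)
  next
    fix U assume U: "silva_open m U" "L \<in> U"
    then obtain V where V: "zero_nbhd m V" "\<forall>v\<in>V. L + v \<in> U" unfolding silva_open_def by blast
    then obtain \<epsilon> where e: "0 < \<epsilon>" "\<forall>z\<in>EM m R. snorm R z < \<epsilon> \<longrightarrow> z \<in> V"
      unfolding zero_nbhd_def using R by blast
    define \<delta> where "\<delta> = min 1 (\<epsilon> / (K + 1))"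
    have d: "0 < \<delta>" unfolding \<delta>_def using e MK by simp
    have "eventually (\<lambda>t. q t \<in> U) (at (0::'a))"
      unfolding eventually_at
    proof (intro exI[of _ \<delta>] conjI ballI impI)
      show "0 < \<delta>" by (rule d)
    next
      fix t :: 'a assume "t \<in> UNIV" and tt: "t \<noteq> 0 \<and> dist t 0 < \<delta>"
      then have t0: "t \<noteq> 0" and tl: "norm t < \<delta>" by auto
      have t1: "norm t \<le> 1" using tl unfolding \<delta>_def by simp
      have C0: "0 \<le> norm t * K" using MK by simp
      have zE: "q t - L \<in> EM m R" by (rule pack_EM(1)[OF R C0 zb[OF t0 t1]])
      have sn: "snorm R (q t - L) \<le> norm t * K" by (rule pack_EM(2)[OF R C0 zb[OF t0 t1]])
      have "norm t * K \<le> norm t * (K + 1)" by (simp add: mult_left_mono)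
      also have "\<dots> < \<epsilon> / (K + 1) * (K + 1)"
        using tl MK unfolding \<delta>_def by (intro mult_strict_right_mono) auto
      also have "\<dots> = \<epsilon>" using MK by simp
      finally have "snorm R (q t - L) < \<epsilon>" using sn by simp
      then have "q t - L \<in> V" using e zE by blast
      then have "L + (q t - L) \<in> U" using V by blast
      then show "q t \<in> U" by simp
    qed
    then show "eventually (\<lambda>t. q t \<in> U) (at 0)" .
  qed
qed


lemma prelie_smul: "prelie m (smul a c) d = smul a (prelie m c d)"
  by (rule ext)+ (simp add: prelie_def smul_def sum_distrib_left mult.assoc)

lemma prelie_zero: "prelie m (0::'a::comm_ring_1 vser) d = 0"
  by (rule ext)+ (simp add: prelie_def)

lemma livf_eq:
  fixes x :: "'a::real_normed_field vser"
  assumes "x \<in> LC m" "is_livf m x X" "c \<in> LC m"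
  shows "X c = x + prelie m c x"
  using silva_unique[OF at_neq_bot[of "0::'a"], of m _ "X c" "x + prelie m c x"] livf_limit[OF assms(1,3)] assms(2,3)
  unfolding is_livf_def dirderiv_def by blast

lemma bracket_limit:
  fixes x y :: "'a::real_normed_field vser"
  assumes xL: "x \<in> LC m" and yL: "y \<in> LC m" and X: "is_livf m x X" and Y: "is_livf m y Y"
  shows "silva_tendsto m (\<lambda>t. smul (inverse t) (Y (0 + smul t (X 0)) - Y 0)) (prelie m x y) (at 0)"
proof (rule silva_const)
  show "prelie m x y \<in> LC m" by (rule prelie_LC[OF yL xL])
  have X0: "X 0 = x" using livf_eq[OF xL X LC_zero] by (simp add: prelie_zero)
  have Y0: "Y 0 = y" using livf_eq[OF yL Y LC_zero] by (simp add: prelie_zero)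
  have "smul (inverse t) (Y (0 + smul t (X 0)) - Y 0) = prelie m x y" if t0: "t \<noteq> 0" for t
  proof -
    have "Y (0 + smul t (X 0)) = y + smul t (prelie m x y)"
      using livf_eq[OF yL Y LC_smul[OF xL, of t]] by (simp add: X0 prelie_smul)
    then show ?thesis using t0 by (intro ext) (simp add: Y0 smul_def)
  qed
  then show "eventually (\<lambda>t. smul (inverse t) (Y (0 + smul t (X 0)) - Y 0) = prelie m x y) (at 0)"
    by (auto simp: eventually_at_filter)
qed

theorem corollary5p6:
  fixes m :: nat and x y :: "'a::real_normed_field vser"
  assumes "x \<in> LC m" and "y \<in> LC m"
  shows "(\<exists>X Y. is_livf m x X \<and> is_livf m y Y) \<and>
         (\<forall>X Y. is_livf m x X \<longrightarrow> is_livf m y Y \<longrightarrow>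
            (\<exists>a b. dirderiv m Y 0 (X 0) a \<and> dirderiv m X 0 (Y 0) b) \<and>
            (\<forall>a b. dirderiv m Y 0 (X 0) a \<longrightarrow> dirderiv m X 0 (Y 0) b \<longrightarrow>
                a - b = prelie m x y - prelie m y x))"
proof (intro conjI allI impI)
  have "is_livf m x (\<lambda>c. x + prelie m c x)"
    unfolding is_livf_def dirderiv_def using livf_limit[OF assms(1)] by blast
  moreover have "is_livf m y (\<lambda>c. y + prelie m c y)"
    unfolding is_livf_def dirderiv_def using livf_limit[OF assms(2)] by blast
  ultimately show "\<exists>X Y. is_livf m x X \<and> is_livf m y Y" by blast
next
  fix X Y assume X: "is_livf m x X" and Y: "is_livf m y Y"
  have a: "dirderiv m Y 0 (X 0) (prelie m x y)"
    unfolding dirderiv_def by (rule bracket_limit[OF assms X Y])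
  have b: "dirderiv m X 0 (Y 0) (prelie m y x)"
    unfolding dirderiv_def by (rule bracket_limit[OF assms(2,1) Y X])
  show "\<exists>a b. dirderiv m Y 0 (X 0) a \<and> dirderiv m X 0 (Y 0) b" using a b by blast
  fix a b assume a': "dirderiv m Y 0 (X 0) a" and b': "dirderiv m X 0 (Y 0) b"
  have "a = prelie m x y"
    using silva_unique[OF at_neq_bot[of "0::'a"]] a a' unfolding dirderiv_def by blast
  moreover have "b = prelie m y x"
    using silva_unique[OF at_neq_bot[of "0::'a"]] b b' unfolding dirderiv_def by blast
  ultimately show "a - b = prelie m x y - prelie m y x" by simp
qed

end
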